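(* Let $a$ be a limit point of a topological space $\mathfrak X$, and let $\{\varphi_n(x)\}_{n\ge1}$ be an asymptotic sequence over $\mathfrak X$ at $x=a$ such that each $\varphi_n$ is nonzero in a punctured neighbourhood of $a$. Let $\{\psi_n(x)\}_{n\ge1}$ be any sequence of complex-valued functions such that $\psi_n(x)-\varphi_n(x)=o(\varphi_m(x))$ $(x\to a)_{\mathfrak X}$ for all positive integers $n\le m$. Then $\{\psi_n(x)\}$ is also an asymptotic sequence over $\mathfrak X$ at $x=a$. Moreover, if $N$ is a positive integer or $\infty$, then for any complex-valued $f(x)$ and complex numbers $a_n$, the asymptotic expansion $f(x)\sim\sum_{n=1}^N a_n\varphi_n(x)$ $(x\to a)_{\mathfrak X}$ of order $N$ holds if and only if the asymptotic expansion $f(x)\sim\sum_{n=1}^N a_n\psi_n(x)$ $(x\to a)_{\mathfrak X}$ of order $N$ holds.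
   Context: $f=o(g)$ $(x\to a)_{\mathfrak X}$: for every $M>0$ there is a punctured neighbourhood $U\subseteq\mathfrak X$ of $a$ with $|f|\le M|g|$ on $U$. Asymptotic sequence at $a$: $\varphi_{n+1}=o(\varphi_n)$ for all $n$. Asymptotic expansion $f\sim\sum_{n=1}^N a_n\varphi_n$ of order $N$: $f-\sum_{k=1}^n a_k\varphi_k=o(\varphi_n)$ for all positive integers $n\le N$ (for $N=\infty$: for all $n$). *)

theory Defs
  imports "HOL-Analysis.Analysis" "HOL-Library.Landau_Symbols" "HOL-Library.Extended_Nat"
begin

definition asymp_sequence :: "'a filter \<Rightarrow> (nat \<Rightarrow> 'a \<Rightarrow> complex) \<Rightarrow> bool" where
  "asymp_sequence F \<phi> \<longleftrightarrow> (\<forall>n\<ge>1. \<phi> (Suc n) \<in> o[F](\<phi> n))"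

definition asymp_expansion ::
  "'a filter \<Rightarrow> ('a \<Rightarrow> complex) \<Rightarrow> (nat \<Rightarrow> complex) \<Rightarrow> (nat \<Rightarrow> 'a \<Rightarrow> complex) \<Rightarrow> enat \<Rightarrow> bool" where
  "asymp_expansion F f c \<phi> N \<longleftrightarrow>
     (\<forall>n::nat. 1 \<le> n \<and> enat n \<le> N \<longrightarrow>
        (\<lambda>x. f x - (\<Sum>k=1..n. c k * \<phi> k x)) \<in> o[F](\<phi> n))"

end

theory Submission
  imports Defs
begin

theorem proposition2p2:
  fixes a :: "'a :: topological_space"
    and \<phi> \<psi> :: "nat \<Rightarrow> 'a \<Rightarrow> complex"
  assumes "a islimpt (UNIV :: 'a set)"
    and "asymp_sequence (at a) \<phi>"
    and "\<forall>n\<ge>1. eventually (\<lambda>x. \<phi> n x \<noteq> 0) (at a)"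
    and "\<forall>n m. 1 \<le> n \<and> n \<le> m \<longrightarrow> (\<lambda>x. \<psi> n x - \<phi> n x) \<in> o[at a](\<phi> m)"
  shows "asymp_sequence (at a) \<psi> \<and>
    (\<forall>(N::enat) (f :: 'a \<Rightarrow> complex) (c :: nat \<Rightarrow> complex). 1 \<le> N \<longrightarrow>
       (asymp_expansion (at a) f c \<phi> N \<longleftrightarrow> asymp_expansion (at a) f c \<psi> N))"
proof -
  have th: "\<psi> n \<in> \<Theta>[at a](\<phi> n)" if "n \<ge> 1" for n
    using assms(4) that by (intro asymp_equiv_imp_bigtheta smallo_imp_asymp_equiv) auto
  have eqo: "o[at a](\<psi> n) = o[at a](\<phi> n)" if "n \<ge> 1" for n
    using th[OF that] by (rule landau_o.small.cong_bigtheta)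
  have seq: "asymp_sequence (at a) \<psi>"
    unfolding asymp_sequence_def
  proof (intro allI impI)
    fix n :: nat assume n: "n \<ge> 1"
    have "\<phi> (Suc n) \<in> o[at a](\<phi> n)" using assms(2) n by (simp add: asymp_sequence_def)
    then have "\<psi> (Suc n) \<in> o[at a](\<phi> n)"
      using th[of "Suc n"] by (auto intro: landau_o.big_small_trans)
    then show "\<psi> (Suc n) \<in> o[at a](\<psi> n)" using eqo[OF n] by simp
  qed
  have key: "(\<lambda>x. f x - (\<Sum>k=1..n. c k * \<phi> k x)) \<in> o[at a](\<phi> n) \<longleftrightarrow>
             (\<lambda>x. f x - (\<Sum>k=1..n. c k * \<psi> k x)) \<in> o[at a](\<psi> n)" if n: "n \<ge> 1" for f c n
  proof -
    define D where "D = (\<lambda>x. \<Sum>k=1..n. c k * (\<psi> k x - \<phi> k x))"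
    have D: "D \<in> o[at a](\<phi> n)"
      unfolding D_def
    proof (rule big_sum_in_smallo)
      fix k assume "k \<in> {1..n}"
      then show "(\<lambda>x. c k * (\<psi> k x - \<phi> k x)) \<in> o[at a](\<phi> n)"
        using assms(4) by (cases "c k = 0") auto
    qed
    have e: "(\<lambda>x. f x - (\<Sum>k=1..n. c k * \<psi> k x)) = (\<lambda>x. (f x - (\<Sum>k=1..n. c k * \<phi> k x)) - D x)"
      by (auto simp: D_def algebra_simps sum_subtractf)
    have e2: "(\<lambda>x. f x - (\<Sum>k=1..n. c k * \<phi> k x)) = (\<lambda>x. (f x - (\<Sum>k=1..n. c k * \<psi> k x)) + D x)"
      by (auto simp: D_def algebra_simps sum_subtractf)
    show ?thesis
      unfolding eqo[OF n]
    proof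
      assume h: "(\<lambda>x. f x - (\<Sum>k=1..n. c k * \<phi> k x)) \<in> o[at a](\<phi> n)"
      show "(\<lambda>x. f x - (\<Sum>k=1..n. c k * \<psi> k x)) \<in> o[at a](\<phi> n)"
        unfolding e by (rule sum_in_smallo(2)[OF h D])
    next
      assume h: "(\<lambda>x. f x - (\<Sum>k=1..n. c k * \<psi> k x)) \<in> o[at a](\<phi> n)"
      show "(\<lambda>x. f x - (\<Sum>k=1..n. c k * \<phi> k x)) \<in> o[at a](\<phi> n)"
        unfolding e2 by (rule sum_in_smallo(1)[OF h D])
    qed
  qed
  show ?thesis
    using seq key unfolding asymp_expansion_def by blast
qed

end
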